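(* Assume $Q[m_{0,0}+m_{0,0}^{-1}]<\infty$. Then either $P^{\mathbf q}(\text{survival})>0$ for $Q$-a.e. $\mathbf q$, or $P^{\mathbf q}(\text{survival})=0$ for $Q$-a.e. $\mathbf q$.
   Context: BRWRE on $\mathbb Z^d$ ($d\ge 1$), with $\mathbb N=\{0,1,\dots\}$ and $\mathbb N^*=\{1,2,\dots\}$. An environment is $\mathbf q=(q_{t,x})_{(t,x)\in\mathbb N\times\mathbb Z^d}$, a family of probability measures on $\mathbb N$, i.i.d. under $Q$. Let $m_{t,x}=\sum_kk\,q_{t,x}(k)$. Given $\mathbf q$, the branching random walk with law $P^{\mathbf q}$ starts with one particle at the origin at time $0$. A particle at site $x$ at time $t$ jumps at time $t+1$ to a uniformly chosen one of the $2d$ nearest neighbours of $x$ and there dies, leaving $k$ new particles with probability $q_{t,x}(k)$; all jumps and offspring numbers are independent. $B_t$ denotes the set of particles at time $t$, and $\{\text{survival}\}=\{B_t\ne\emptyset\ \forall t\ge0\}$. *)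

theory Defs
  imports "HOL-Analysis.Analysis" "HOL-Probability.Probability"
begin

text \<open>Sites of the lattice Z^d are vectors int^'d, with 'd a finite (nonempty) index type,
  so d = CARD('d) >= 1.  A probability measure on N is represented by its weight
  function N -> R; an environment assigns one to every space-time point (t,x).\<close>

type_synonym 'd env = "nat \<times> (int ^ 'd) \<Rightarrow> (nat \<Rightarrow> real)"

definition nbrs :: "int ^ ('d::finite) \<Rightarrow> (int ^ 'd) set" where
  "nbrs x = {x + axis i 1 | i. True} \<union> {x + axis i (-1) | i. True}"

definition qpmf :: "('d::finite) env \<Rightarrow> nat \<Rightarrow> int ^ 'd \<Rightarrow> nat pmf" where
  "qpmf q t x = embed_pmf (q (t, x))"

definition mean :: "(nat \<Rightarrow> real) \<Rightarrow> ennreal" where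
  "mean p = (\<integral>\<^sup>+ k. ennreal (real k * p k) \<partial>count_space UNIV)"

definition children :: "('d::finite) env \<Rightarrow> nat \<Rightarrow> int ^ 'd \<Rightarrow> (int ^ 'd) list pmf" where
  "children q t x =
     bind_pmf (pmf_of_set (nbrs x)) (\<lambda>y.
     bind_pmf (qpmf q t x) (\<lambda>k. return_pmf (replicate k y)))"

definition step :: "('d::finite) env \<Rightarrow> nat \<Rightarrow> (int ^ 'd) list \<Rightarrow> (int ^ 'd) list pmf" where
  "step q t xs =
     map_pmf (\<lambda>f. concat (map f [0..<length xs]))
       (Pi_pmf {..<length xs} [] (\<lambda>i. children q t (xs ! i)))"

text \<open>Law of the population B_t (list of positions of the particles) under P^q.\<close>
fun pop :: "('d::finite) env \<Rightarrow> nat \<Rightarrow> (int ^ 'd) list pmf" where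
  "pop q 0 = return_pmf [0]"
| "pop q (Suc t) = bind_pmf (pop q t) (step q t)"

text \<open>P^q(survival) = P^q(B_t \<noteq> {} for all t); since the empty population is absorbing,
  the events {B_t \<noteq> {}} decrease and this is the infimum of their probabilities.\<close>
definition surv_prob :: "('d::finite) env \<Rightarrow> real" where
  "surv_prob q = (INF t. measure_pmf.prob (pop q t) {xs. xs \<noteq> []})"

end

theory Submission
  imports Defs
begin


definition valid :: "('d::finite) env \<Rightarrow> bool" where
  "valid q \<longleftrightarrow> (\<forall>s z. (\<forall>k. 0 \<le> q (s,z) k) \<and> q (s,z) sums 1)"

fun pop2 :: "('d::finite) env \<Rightarrow> nat \<Rightarrow> (int ^ 'd) list \<Rightarrow> nat \<Rightarrow> (int ^ 'd) list pmf" where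
  "pop2 q s zs 0 = return_pmf zs"
| "pop2 q s zs (Suc t) = bind_pmf (pop2 q s zs t) (step q (s + t))"

lemma pop_pop2: "pop q t = pop2 q 0 [0] t"
  by (induction t) auto

lemma pop2_back: "pop2 q s zs (Suc t) = bind_pmf (step q s zs) (\<lambda>ws. pop2 q (Suc s) ws t)"
proof (induction t)
  case 0
  then show ?case by (simp add: bind_return_pmf bind_return_pmf')
next
  case (Suc t)
  show ?case
    by (subst pop2.simps, subst Suc) (simp add: bind_assoc_pmf)
qed

fun EE :: "('d::finite) env \<Rightarrow> nat \<Rightarrow> int ^ 'd \<Rightarrow> nat \<Rightarrow> ennreal" where
  "EE q s z 0 = 0"
| "EE q s z (Suc t) = (\<Sum>y\<in>nbrs z. \<Sum>k. ennreal (q (s,z) k) * EE q (Suc s) y t ^ k) / of_nat (card (nbrs z))"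

lemma finite_nbrs: "finite (nbrs (x :: int ^ ('d::finite)))"
proof -
  have "nbrs x = range (\<lambda>i. x + axis i 1) \<union> range (\<lambda>i. x + axis i (-1))"
    unfolding nbrs_def by auto
  then show ?thesis by simp
qed

lemma nbrs_ne: "nbrs (x :: int ^ ('d::finite)) \<noteq> {}"
  unfolding nbrs_def by auto

lemma qpmf_int:
  assumes "\<And>k. 0 \<le> p k" "p sums 1"
  shows "(\<integral>\<^sup>+k. f k \<partial>measure_pmf (embed_pmf p)) = (\<Sum>k. ennreal (p k) * f k)"
proof -
  have prob: "(\<integral>\<^sup>+x. p x \<partial>count_space UNIV) = 1"
    using assms by (simp add: nn_integral_count_space_nat suminf_ennreal_eq[OF assms(1,2)])
  have "pmf (embed_pmf p) x = p x" for x
    using pmf_embed_pmf[OF assms(1) prob] .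
  then show ?thesis
    by (simp add: nn_integral_measure_pmf nn_integral_count_space_nat)
qed

lemma children_int:
  "(\<integral>\<^sup>+ws. prod_list (map g ws) \<partial>measure_pmf (children q s z)) =
     (\<Sum>y\<in>nbrs z. \<integral>\<^sup>+k. g y ^ k \<partial>measure_pmf (qpmf q s z)) / of_nat (card (nbrs z))"
  unfolding children_def
  by (simp add: nn_integral_pmf_of_set finite_nbrs nbrs_ne)

lemma prod_list_concat_map: "prod_list (map g (concat xss)) = prod_list (map (\<lambda>xs. prod_list (map g xs)) xss)"
  by (induction xss) auto

lemma prod_list_upt: "prod_list (map h [0..<n]) = (\<Prod>i<n. h i)"
  by (induction n) simp_all

lemma prod_list_nth: "prod_list (map h zs) = (\<Prod>i<length zs. h (zs ! i))"
proof -
  have "map h zs = map (\<lambda>i. h (zs ! i)) [0..<length zs]"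
    by (rule nth_equalityI) simp_all
  then show ?thesis by (subst (1) \<open>map h zs = _\<close>) (rule prod_list_upt)
qed

lemma step_int:
  "(\<integral>\<^sup>+ws. prod_list (map g ws) \<partial>measure_pmf (step q s zs)) =
     prod_list (map (\<lambda>z. \<integral>\<^sup>+ws. prod_list (map g ws) \<partial>measure_pmf (children q s z)) zs)"
proof -
  have "(\<integral>\<^sup>+ws. prod_list (map g ws) \<partial>measure_pmf (step q s zs)) =
     (\<integral>\<^sup>+f. (\<Prod>i\<in>{..<length zs}. prod_list (map g (f i))) \<partial>measure_pmf (Pi_pmf {..<length zs} [] (\<lambda>i. children q s (zs ! i))))"
    unfolding step_def by (simp add: prod_list_concat_map map_map o_def prod_list_upt)
  also have "\<dots> = (\<Prod>i\<in>{..<length zs}. \<integral>\<^sup>+ws. prod_list (map g ws) \<partial>measure_pmf (children q s (zs ! i)))"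
    by (rule nn_integral_prod_Pi_pmf) simp
  also have "\<dots> = prod_list (map (\<lambda>z. \<integral>\<^sup>+ws. prod_list (map g ws) \<partial>measure_pmf (children q s z)) zs)"
    by (simp add: prod_list_nth)
  finally show ?thesis .
qed

lemma ext_identity:
  assumes "valid q"
  shows "ennreal (pmf (pop2 q s zs t) []) = prod_list (map (\<lambda>z. EE q s z t) zs)"
proof (induction t arbitrary: s zs)
  case 0
  then show ?case by (cases zs) auto
next
  case (Suc t)
  have v: "\<And>k. 0 \<le> q (s,z) k" "q (s,z) sums 1" for z
    using assms unfolding valid_def by auto
  have "ennreal (pmf (pop2 q s zs (Suc t)) []) =
      (\<integral>\<^sup>+ws. ennreal (pmf (pop2 q (Suc s) ws t) []) \<partial>measure_pmf (step q s zs))"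
    unfolding pop2_back by (rule ennreal_pmf_bind)
  also have "\<dots> = (\<integral>\<^sup>+ws. prod_list (map (\<lambda>w. EE q (Suc s) w t) ws) \<partial>measure_pmf (step q s zs))"
    using Suc by simp
  also have "\<dots> = prod_list (map (\<lambda>z. EE q s z (Suc t)) zs)"
  proof -
    have c: "(\<integral>\<^sup>+ws. prod_list (map (\<lambda>w. EE q (Suc s) w t) ws) \<partial>measure_pmf (children q s z)) = EE q s z (Suc t)" for z
    proof -
      have "\<And>y. (\<integral>\<^sup>+k. EE q (Suc s) y t ^ k \<partial>measure_pmf (qpmf q s z)) = (\<Sum>k. ennreal (q (s,z) k) * EE q (Suc s) y t ^ k)"
        unfolding qpmf_def by (rule qpmf_int[OF v])
      then show ?thesis by (simp only: children_int EE.simps)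
    qed
    show ?thesis by (simp only: step_int c)
  qed
  finally show ?case .
qed



definition ee :: "('d::finite) env \<Rightarrow> nat \<Rightarrow> int ^ 'd \<Rightarrow> nat \<Rightarrow> real" where
  "ee q s z t = enn2real (EE q s z t)"

lemma EE_pmf: "valid q \<Longrightarrow> EE q s z t = ennreal (pmf (pop2 q s [z] t) [])"
  using ext_identity[of q s "[z]" t] by simp

lemma EE_ee: "valid q \<Longrightarrow> EE q s z t = ennreal (ee q s z t)"
  unfolding ee_def by (simp add: EE_pmf)

lemma ee_ge0: "0 \<le> ee q s z t"
  unfolding ee_def by simp

lemma ee_le1: "valid q \<Longrightarrow> ee q s z t \<le> 1"
  unfolding ee_def by (simp add: EE_pmf pmf_le_1)

lemma ee_0[simp]: "ee q s z 0 = 0"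
  unfolding ee_def by simp

lemma EE_mono: "EE q s z t \<le> EE q s z (Suc t)"
proof (induction t arbitrary: s z)
  case 0
  then show ?case by simp
next
  case (Suc t)
  show ?case
    apply (subst (1 2) EE.simps(2))
    apply (intro divide_right_mono_ennreal sum_mono suminf_le mult_left_mono power_mono Suc.IH)
       apply (auto intro: summableI)
    done
qed

lemma ee_mono:
  assumes "valid q" "t \<le> t'"
  shows "ee q s z t \<le> ee q s z t'"
proof -
  have "EE q s z t \<le> EE q s z t'"
    using lift_Suc_mono_le[of "EE q s z", OF EE_mono assms(2)] .
  then show ?thesis unfolding ee_def
    by (rule enn2real_mono) (simp add: EE_ee[OF assms(1)])
qed

definition GG :: "(nat \<Rightarrow> real) \<Rightarrow> real \<Rightarrow> real" where
  "GG p x = (\<Sum>k. p k * x ^ k)"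

locale pvec =
  fixes p :: "nat \<Rightarrow> real"
  assumes nonneg: "\<And>k. 0 \<le> p k" and sums1: "p sums 1"
begin

lemma summ: "summable p" using sums1 by (rule sums_summable)
lemma suminf1: "suminf p = 1" using sums1 by (rule sums_unique[symmetric])

lemma summ_G:
  assumes "0 \<le> x" "x \<le> 1"
  shows "summable (\<lambda>k. p k * x ^ k)"
proof (rule summable_comparison_test[OF _ summ])
  show "\<exists>N. \<forall>n\<ge>N. norm (p n * x ^ n) \<le> p n"
    using assms nonneg by (auto simp: abs_mult intro!: mult_left_le power_le_one)
qed

lemma G_ge0: "0 \<le> x \<Longrightarrow> x \<le> 1 \<Longrightarrow> 0 \<le> GG p x"
  unfolding GG_def using nonneg by (intro suminf_nonneg summ_G) auto

lemma G_le1: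
  assumes "0 \<le> x" "x \<le> 1"
  shows "GG p x \<le> 1"
proof -
  have "GG p x \<le> suminf p"
    unfolding GG_def using assms nonneg
    by (intro suminf_le summ_G summ) (auto intro!: mult_left_le power_le_one)
  then show ?thesis using suminf1 by simp
qed

lemma G_upper:
  assumes "0 \<le> x" "x \<le> 1" "1 \<le> k0"
  shows "GG p x \<le> 1 - p k0 * (1 - x)"
proof -
  define d where "d = (\<lambda>k. if k = k0 then p k0 * (1 - x) else 0)"
  have dsums: "d sums (p k0 * (1 - x))"
    unfolding d_def using sums_single[of k0 "\<lambda>_. p k0 * (1 - x)"] by simp
  have "(\<lambda>k. p k - d k) sums (1 - p k0 * (1 - x))"
    by (rule sums_diff[OF sums1 dsums])
  moreover have "GG p x \<le> (\<Sum>k. p k - d k)"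
    unfolding GG_def
  proof (rule suminf_le)
    show "summable (\<lambda>k. p k * x ^ k)" using summ_G assms by auto
    show "summable (\<lambda>k. p k - d k)" using sums_diff[OF sums1 dsums] by (rule sums_summable)
    fix k
    show "p k * x ^ k \<le> p k - d k"
    proof (cases "k = k0")
      case True
      have "x ^ k0 \<le> x"
        using assms power_decreasing[of 1 k0 x] by simp
      then have "p k0 * x ^ k0 \<le> p k0 * x" using nonneg by (intro mult_left_mono) auto
      then show ?thesis using True by (simp add: d_def algebra_simps)
    next
      case False
      then show ?thesis using assms nonneg
        by (simp add: d_def mult_left_le power_le_one)
    qed
  qed
  ultimately show ?thesis by (simp add: sums_unique[symmetric])
qed

lemma one_minus_power_le:
  fixes x :: real
  assumes "0 \<le> x" "x \<le> 1"
  shows "1 - x ^ k \<le> real k * (1 - x)"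
proof (induction k)
  case 0
  then show ?case by simp
next
  case (Suc k)
  have "x ^ k \<le> 1" using assms by (simp add: power_le_one)
  then have "x ^ k * (1 - x) \<le> 1 - x" using assms by (simp add: mult_left_le_one_le)
  have "1 - x ^ Suc k = (1 - x ^ k) + x ^ k * (1 - x)" by (simp add: algebra_simps)
  also have "\<dots> \<le> real k * (1 - x) + (1 - x)"
    using Suc \<open>x ^ k * (1 - x) \<le> 1 - x\<close> by linarith
  finally show ?case by (simp add: algebra_simps)
qed

lemma G_lower:
  assumes "0 \<le> x" "x \<le> 1" "summable (\<lambda>k. real k * p k)"
  shows "1 - GG p x \<le> (\<Sum>k. real k * p k) * (1 - x)"
proof -
  have s1: "(\<lambda>k. p k - p k * x ^ k) sums (1 - GG p x)"
    unfolding GG_def by (intro sums_diff sums1 summable_sums summ_G assms)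
  have s2: "(\<lambda>k. real k * p k * (1 - x)) sums ((\<Sum>k. real k * p k) * (1 - x))"
    by (intro sums_mult2 summable_sums assms)
  have "\<And>k. p k - p k * x ^ k \<le> real k * p k * (1 - x)"
  proof -
    fix k
    have "p k * (1 - x ^ k) \<le> p k * (real k * (1 - x))"
      using nonneg one_minus_power_le[OF assms(1,2)] by (intro mult_left_mono) auto
    then show "p k - p k * x ^ k \<le> real k * p k * (1 - x)" by (simp add: algebra_simps)
  qed
  then show ?thesis using sums_le[OF _ s1 s2] by blast
qed

end

lemma valid_pvec: "valid q \<Longrightarrow> pvec (q (s,z))"
  unfolding valid_def pvec_def by auto

lemma ee_rec:
  assumes "valid q"
  shows "ee q s z (Suc t) = (\<Sum>y\<in>nbrs z. GG (q (s,z)) (ee q (Suc s) y t)) / real (card (nbrs z))"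
proof -
  interpret pvec "q (s,z)" using valid_pvec[OF assms] .
  have x01: "0 \<le> ee q (Suc s) y t" "ee q (Suc s) y t \<le> 1" for y
    using ee_ge0 ee_le1[OF assms] by auto
  have inner: "(\<Sum>k. ennreal (q (s,z) k) * EE q (Suc s) y t ^ k) = ennreal (GG (q (s,z)) (ee q (Suc s) y t))" for y
  proof -
    have "(\<Sum>k. ennreal (q (s,z) k) * EE q (Suc s) y t ^ k) = (\<Sum>k. ennreal (q (s,z) k * ee q (Suc s) y t ^ k))"
      using nonneg x01 by (simp add: EE_ee[OF assms] ennreal_power ennreal_mult)
    also have "\<dots> = ennreal (GG (q (s,z)) (ee q (Suc s) y t))"
      unfolding GG_def using nonneg x01
      by (intro suminf_ennreal_eq summable_sums summ_G) auto
    finally show ?thesis .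
  qed
  have cpos: "0 < real (card (nbrs z))"
    using finite_nbrs[of z] nbrs_ne[of z] by (simp add: card_gt_0_iff)
  have G0: "\<And>y. 0 \<le> GG (q (s,z)) (ee q (Suc s) y t)"
    using x01 G_ge0 by auto
  have "EE q s z (Suc t) = ennreal (\<Sum>y\<in>nbrs z. GG (q (s,z)) (ee q (Suc s) y t)) / ennreal (real (card (nbrs z)))"
    by (simp add: inner G0 sum_ennreal ennreal_of_nat_eq_real_of_nat)
  also have "\<dots> = ennreal ((\<Sum>y\<in>nbrs z. GG (q (s,z)) (ee q (Suc s) y t)) / real (card (nbrs z)))"
    using cpos G0 by (intro divide_ennreal sum_nonneg) auto
  finally have "ee q s z (Suc t) = enn2real (ennreal ((\<Sum>y\<in>nbrs z. GG (q (s,z)) (ee q (Suc s) y t)) / real (card (nbrs z))))"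
    by (simp only: ee_def[of q s z "Suc t"])
  then show ?thesis
    using cpos G0 by (simp add: sum_nonneg)
qed



definition Pos :: "('d::finite) env \<Rightarrow> nat \<Rightarrow> int ^ 'd \<Rightarrow> bool" where
  "Pos q s z \<longleftrightarrow> (\<exists>n::nat. \<forall>t. 1 / real (Suc n) \<le> 1 - ee q s z t)"

lemma card_nbrs_pos: "0 < card (nbrs (z :: int ^ ('d::finite)))"
  using finite_nbrs[of z] nbrs_ne[of z] by (simp add: card_gt_0_iff)

lemma one_minus_ee_rec:
  assumes "valid q"
  shows "1 - ee q s z (Suc t) = (\<Sum>y\<in>nbrs z. 1 - GG (q (s,z)) (ee q (Suc s) y t)) / real (card (nbrs z))"
proof -
  have c: "real (card (nbrs z)) \<noteq> 0" using card_nbrs_pos[of z] by simp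
  show ?thesis
    unfolding ee_rec[OF assms] sum_subtractf using c by (simp add: field_simps)
qed

lemma small_inverse:
  assumes "0 < (d::real)"
  shows "\<exists>n. 1 / real (Suc n) \<le> d"
proof -
  obtain n where n: "n > 0" "inverse (real n) < d" using ex_inverse_of_nat_less[OF assms] by auto
  then have "1 / real (Suc (n - 1)) \<le> d" by (simp add: divide_inverse)
  then show ?thesis by blast
qed

lemma Pos_L:
  assumes v: "valid q" and k0: "1 \<le> k0" "0 < q (s,z) k0" and y: "y \<in> nbrs z"
    and P: "Pos q (Suc s) y"
  shows "Pos q s z"
proof -
  interpret pvec "q (s,z)" using valid_pvec[OF v] .
  obtain n where n: "\<And>t. 1 / real (Suc n) \<le> 1 - ee q (Suc s) y t"
    using P unfolding Pos_def by auto
  define N where "N = real (card (nbrs z))"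
  have Npos: "0 < N" unfolding N_def using card_nbrs_pos[of z] by simp
  define c where "c = q (s,z) k0"
  have cpos: "0 < c" unfolding c_def using k0 by simp
  define d where "d = min 1 (c * (1 / real (Suc n)) / N)"
  have dpos: "0 < d" unfolding d_def using cpos Npos by simp
  obtain n' where n': "1 / real (Suc n') \<le> d" using small_inverse[OF dpos] by auto
  have "1 / real (Suc n') \<le> 1 - ee q s z t" for t
  proof (cases t)
    case 0
    then show ?thesis using n' by (simp add: d_def)
  next
    case (Suc t')
    let ?x = "\<lambda>y'. ee q (Suc s) y' t'"
    have x01: "0 \<le> ?x y'" "?x y' \<le> 1" for y' using ee_ge0 ee_le1[OF v] by auto
    have "c * (1 / real (Suc n)) \<le> c * (1 - ?x y)"
      using n[of t'] cpos by (intro mult_left_mono) auto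
    also have "\<dots> \<le> 1 - GG (q (s,z)) (?x y)"
      using G_upper[OF x01(1)[of y] x01(2)[of y] k0(1)] unfolding c_def by linarith
    also have "\<dots> \<le> (\<Sum>y'\<in>nbrs z. 1 - GG (q (s,z)) (?x y'))"
      using y finite_nbrs[of z] G_le1 x01
      by (intro member_le_sum) auto
    finally have "c * (1 / real (Suc n)) / N \<le> (\<Sum>y'\<in>nbrs z. 1 - GG (q (s,z)) (?x y')) / N"
      using Npos by (intro divide_right_mono) auto
    then have "d \<le> 1 - ee q s z t"
      unfolding Suc one_minus_ee_rec[OF v] N_def[symmetric] d_def by linarith
    then show ?thesis using n' by linarith
  qed
  then show ?thesis unfolding Pos_def by blast
qed

lemma not_Pos_small:
  assumes "\<not> Pos q s z" "0 < (eps::real)"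
  shows "\<exists>t. 1 - ee q s z t < eps"
proof -
  obtain n where n: "1 / real (Suc n) \<le> eps" using small_inverse[OF assms(2)] by auto
  from assms(1) obtain t where "\<not> 1 / real (Suc n) \<le> 1 - ee q s z t"
    unfolding Pos_def by auto
  then have "1 - ee q s z t < eps" using n by linarith
  then show ?thesis by blast
qed

lemma Pos_U:
  assumes v: "valid q" and sm: "summable (\<lambda>k. real k * q (s,z) k)"
    and P: "Pos q s z"
  shows "\<exists>y\<in>nbrs z. Pos q (Suc s) y"
proof (rule ccontr)
  assume H: "\<not> (\<exists>y\<in>nbrs z. Pos q (Suc s) y)"
  interpret pvec "q (s,z)" using valid_pvec[OF v] .
  obtain n0 where n0: "\<And>t. 1 / real (Suc n0) \<le> 1 - ee q s z t"
    using P unfolding Pos_def by auto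
  define m where "m = (\<Sum>k. real k * q (s,z) k)"
  have m0: "0 \<le> m" unfolding m_def using nonneg by (intro suminf_nonneg sm) auto
  define eps where "eps = 1 / (real (Suc n0) * (m + 1))"
  have epos: "0 < eps" unfolding eps_def using m0 by simp
  have "\<forall>y\<in>nbrs z. \<exists>t. 1 - ee q (Suc s) y t < eps"
    using H not_Pos_small[OF _ epos] by blast
  then obtain tf where tf: "\<And>y. y \<in> nbrs z \<Longrightarrow> 1 - ee q (Suc s) y (tf y) < eps"
    by metis
  define T where "T = Max (tf ` nbrs z)"
  have sm': "\<And>y. y \<in> nbrs z \<Longrightarrow> 1 - ee q (Suc s) y T < eps"
  proof -
    fix y assume y: "y \<in> nbrs z"
    have "tf y \<le> T" unfolding T_def using y finite_nbrs[of z] by simp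
    then have "ee q (Suc s) y (tf y) \<le> ee q (Suc s) y T" by (rule ee_mono[OF v])
    then show "1 - ee q (Suc s) y T < eps" using tf[OF y] by linarith
  qed
  let ?x = "\<lambda>y'. ee q (Suc s) y' T"
  have x01: "0 \<le> ?x y'" "?x y' \<le> 1" for y' using ee_ge0 ee_le1[OF v] by auto
  define N where "N = real (card (nbrs z))"
  have Npos: "0 < N" unfolding N_def using card_nbrs_pos[of z] by simp
  have "(\<Sum>y'\<in>nbrs z. 1 - GG (q (s,z)) (?x y')) \<le> (\<Sum>y'\<in>nbrs z. m * eps)"
  proof (rule sum_mono)
    fix y' assume y': "y' \<in> nbrs z"
    have "1 - GG (q (s,z)) (?x y') \<le> m * (1 - ?x y')"
      unfolding m_def using G_lower[OF x01 sm] .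
    also have "\<dots> \<le> m * eps" using sm'[OF y'] m0 by (intro mult_left_mono) auto
    finally show "1 - GG (q (s,z)) (?x y') \<le> m * eps" .
  qed
  also have "\<dots> = N * (m * eps)" unfolding N_def by simp
  finally have "1 - ee q s z (Suc T) \<le> m * eps"
    unfolding one_minus_ee_rec[OF v] N_def[symmetric] using Npos by (simp add: field_simps)
  also have "m * eps < 1 / real (Suc n0)"
  proof -
    have e: "m * eps = (1 / real (Suc n0)) * (m / (m + 1))" unfolding eps_def by (simp add: field_simps)
    have "m / (m + 1) < 1" using m0 by simp
    then have "(1 / real (Suc n0)) * (m / (m + 1)) < (1 / real (Suc n0)) * 1"
      by (intro mult_strict_left_mono) auto
    then show ?thesis using e by simp
  qed
  finally show False using n0[of "Suc T"] by linarith
qed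



definition good :: "('d::finite) env \<Rightarrow> bool" where
  "good q \<longleftrightarrow> valid q \<and> (\<forall>s z. 0 < mean (q (s,z)) \<and> mean (q (s,z)) < \<infinity>)"

lemma mean_suminf: "mean p = (\<Sum>k. ennreal (real k * p k))"
  unfolding mean_def by (simp add: nn_integral_count_space_nat)

lemma mean_fin_summable:
  assumes "\<And>k. 0 \<le> p k" "mean p < \<infinity>"
  shows "summable (\<lambda>k. real k * p k)"
  using assms by (intro summable_suminf_not_top) (auto simp: mean_suminf)

lemma mean_pos_ex:
  assumes "\<And>k. 0 \<le> p k" "0 < mean p"
  shows "\<exists>k0. 1 \<le> k0 \<and> 0 < p k0"
proof (rule ccontr)
  assume "\<not> ?thesis"
  then have "\<And>k. real k * p k = 0"
  proof -
    fix k
    show "real k * p k = 0"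
    proof (cases "k = 0")
      case False
      then have "1 \<le> k" by simp
      then have "\<not> 0 < p k" using \<open>\<not> (\<exists>k0. 1 \<le> k0 \<and> 0 < p k0)\<close> by blast
      then have "p k = 0" using assms(1)[of k] by simp
      then show ?thesis by simp
    qed simp
  qed
  then have "mean p = (\<Sum>k::nat. (0::ennreal))" unfolding mean_suminf by (simp only: ennreal_0)
  then have "mean p = 0" by simp
  then show False using assms(2) by simp
qed

lemma Pos_iff:
  assumes "good q"
  shows "Pos q s z \<longleftrightarrow> (\<exists>y\<in>nbrs z. Pos q (Suc s) y)"
proof
  have v: "valid q" using assms unfolding good_def by auto
  have nn: "\<And>k. 0 \<le> q (s,z) k" using v unfolding valid_def by auto
  have m: "0 < mean (q (s,z))" "mean (q (s,z)) < \<infinity>" using assms unfolding good_def by auto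
  show "Pos q s z \<Longrightarrow> \<exists>y\<in>nbrs z. Pos q (Suc s) y"
    using Pos_U[OF v mean_fin_summable[OF nn m(2)]] .
  assume "\<exists>y\<in>nbrs z. Pos q (Suc s) y"
  then obtain y where "y \<in> nbrs z" "Pos q (Suc s) y" by auto
  moreover obtain k0 where "1 \<le> k0" "0 < q (s,z) k0" using mean_pos_ex[OF nn m(1)] by auto
  ultimately show "Pos q s z" using Pos_L[OF v] by blast
qed

fun RR :: "nat \<Rightarrow> (int ^ ('d::finite)) set" where
  "RR 0 = {0}"
| "RR (Suc T) = (\<Union>y\<in>RR T. nbrs y)"

lemma finite_RR: "finite (RR T)"
  by (induction T) (auto simp: finite_nbrs)

lemma Pos_RR:
  assumes "good q"
  shows "Pos q 0 0 \<longleftrightarrow> (\<exists>y\<in>RR T. Pos q T y)"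
proof (induction T)
  case 0
  then show ?case by simp
next
  case (Suc T)
  show ?case unfolding Suc using Pos_iff[OF assms, of T] by auto
qed

lemma pmf_pop_ee: "valid q \<Longrightarrow> pmf (pop q t) [] = ee q 0 0 t"
  unfolding ee_def by (simp add: EE_pmf pop_pop2)

lemma surv_eq: "valid q \<Longrightarrow> surv_prob q = (INF t. 1 - ee q 0 0 t)"
proof -
  assume v: "valid q"
  have "measure_pmf.prob (pop q t) {xs. xs \<noteq> []} = 1 - ee q 0 0 t" for t
  proof -
    have "measure_pmf.prob (pop q t) {xs. xs \<noteq> []} = measure_pmf.prob (pop q t) (space (measure_pmf (pop q t)) - {[]})"
      by (intro arg_cong[where f="measure_pmf.prob (pop q t)"]) auto
    also have "\<dots> = 1 - measure_pmf.prob (pop q t) {[]}"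
      by (rule measure_pmf.prob_compl) simp
    also have "\<dots> = 1 - ee q 0 0 t"
      by (simp add: measure_pmf_single pmf_pop_ee[OF v])
    finally show ?thesis .
  qed
  then show ?thesis unfolding surv_prob_def by simp
qed

lemma surv_pos_iff:
  assumes v: "valid q"
  shows "0 < surv_prob q \<longleftrightarrow> Pos q 0 0"
proof -
  let ?f = "\<lambda>t. 1 - ee q 0 0 t"
  have bdd: "bdd_below (range ?f)"
    using ee_le1[OF v] by (intro bdd_belowI[of _ 0]) auto
  show ?thesis
  proof
    assume "0 < surv_prob q"
    then have pos: "0 < (INF t. ?f t)" using surv_eq[OF v] by simp
    show "Pos q 0 0"
    proof (rule ccontr)
      assume "\<not> Pos q 0 0"
      then obtain t where "?f t < (INF t. ?f t)" using not_Pos_small[OF _ pos] by blast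
      moreover have "(INF t. ?f t) \<le> ?f t" by (rule cINF_lower[OF bdd]) simp
      ultimately show False by simp
    qed
  next
    assume "Pos q 0 0"
    then obtain n where n: "\<And>t. 1 / real (Suc n) \<le> ?f t" unfolding Pos_def by auto
    have "1 / real (Suc n) \<le> (INF t. ?f t)" by (rule cINF_greatest, simp, rule n)
    moreover have "0 < 1 / real (Suc n)" by simp
    ultimately show "0 < surv_prob q" using surv_eq[OF v] by linarith
  qed
qed

lemma surv_zero:
  assumes v: "valid q" and np: "\<not> Pos q 0 0"
  shows "surv_prob q = 0"
proof -
  have "0 \<le> (INF t. 1 - ee q 0 0 t)"
    using ee_le1[OF v] by (intro cINF_greatest) auto
  then have "0 \<le> surv_prob q" using surv_eq[OF v] by simp
  then show ?thesis using surv_pos_iff[OF v] np by linarith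
qed



theorem proposition2p2p1:
  fixes \<mu> :: "(nat \<Rightarrow> real) measure"
    and Q :: "('d::finite) env measure"
  assumes "prob_space \<mu>"
    and "sets \<mu> = sets (\<Pi>\<^sub>M k\<in>(UNIV::nat set). (borel :: real measure))"
    and "AE p in \<mu>. (\<forall>k. 0 \<le> p k) \<and> p sums 1"
    and "Q = (\<Pi>\<^sub>M z\<in>(UNIV :: (nat \<times> (int ^ 'd)) set). \<mu>)"
    and "(\<integral>\<^sup>+ q. mean (q (0, 0)) + inverse (mean (q (0, 0))) \<partial>Q) < \<infinity>"
  shows "(AE q in Q. surv_prob q > 0) \<or> (AE q in Q. surv_prob q = 0)"
proof -
  have mu[measurable]: "(\<lambda>p. p k) \<in> borel_measurable \<mu>" for k
    by (subst measurable_cong_sets[OF assms(2) refl]) (rule measurable_component_singleton, simp)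
  have meanm[measurable]: "mean \<in> borel_measurable \<mu>"
  proof -
    have "mean = (\<lambda>p. \<Sum>k. ennreal (real k * p k))" by (rule ext) (rule mean_suminf)
    moreover have "(\<lambda>p. \<Sum>k. ennreal (real k * p k)) \<in> borel_measurable \<mu>" by measurable
    ultimately show ?thesis by simp
  qed
  interpret Q: prob_space Q
    unfolding assms(4) by (rule prob_space_PiM) (rule assms(1))
  have distr0: "distr Q \<mu> (\<lambda>q. q i) = \<mu>" for i
    unfolding assms(4) by (rule distr_PiM_component) (auto intro: assms(1))
  have AEmu: "AE p in \<mu>. 0 < mean p \<and> mean p < \<infinity>"
  proof -
    let ?f = "\<lambda>p. mean p + inverse (mean p)"
    have fm: "?f \<in> borel_measurable \<mu>" by measurable
    have cm: "(\<lambda>q. q (0,0)) \<in> measurable Q \<mu>"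
      unfolding assms(4) by (rule measurable_component_singleton) simp
    have "(\<integral>\<^sup>+p. ?f p \<partial>\<mu>) = (\<integral>\<^sup>+p. ?f p \<partial>distr Q \<mu> (\<lambda>q. q (0,0)))"
      by (simp add: distr0)
    also have "\<dots> = (\<integral>\<^sup>+q. ?f (q (0,0)) \<partial>Q)"
      by (rule nn_integral_distr[OF cm]) (simp add: distr0 fm)
    finally have "(\<integral>\<^sup>+p. ?f p \<partial>\<mu>) \<noteq> \<infinity>" using assms(5) by simp
    then have "AE p in \<mu>. ?f p \<noteq> \<infinity>" by (rule nn_integral_PInf_AE[OF fm])
    then show ?thesis
    proof (rule AE_mp, intro AE_I2 impI)
      fix p assume "?f p \<noteq> \<infinity>"
      then have "mean p \<noteq> \<infinity>" "inverse (mean p) \<noteq> \<infinity>" by auto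
      moreover have "mean p \<noteq> 0"
      proof
        assume "mean p = 0"
        then show False using \<open>inverse (mean p) \<noteq> \<infinity>\<close> by simp
      qed
      ultimately show "0 < mean p \<and> mean p < \<infinity>"
        by (simp add: less_top[symmetric] zero_less_iff_neq_zero)
    qed
  qed
  have AEgood: "AE q in Q. good q"
  proof -
    have "AE q in Q. \<forall>i. ((\<forall>k. 0 \<le> q i k) \<and> q i sums 1) \<and> (0 < mean (q i) \<and> mean (q i) < \<infinity>)"
    proof (subst AE_all_countable, intro allI)
      fix i :: "nat \<times> (int ^ 'd)"
      have "AE p in \<mu>. ((\<forall>k. 0 \<le> p k) \<and> p sums 1) \<and> (0 < mean p \<and> mean p < \<infinity>)"
        using assms(3) AEmu by eventually_elim auto
      then show "AE q in Q. ((\<forall>k. 0 \<le> q i k) \<and> q i sums 1) \<and> (0 < mean (q i) \<and> mean (q i) < \<infinity>)"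
        unfolding assms(4) by (rule AE_PiM_component[of UNIV "\<lambda>_. \<mu>" i, OF assms(1) UNIV_I])
    qed
    then show ?thesis
      by eventually_elim (auto simp: good_def valid_def)
  qed
  define E where "E i = {(\<lambda>q. q i) -` B \<inter> space Q | B. B \<in> sets \<mu>}" for i :: "nat \<times> (int ^ 'd)"
  have indepE: "Q.indep_sets E UNIV"
  proof -
    have rv: "Q.random_variable \<mu> (\<lambda>q. q i)" for i
      unfolding assms(4) by (rule measurable_component_singleton) simp
    have "Q.indep_vars (\<lambda>_. \<mu>) (\<lambda>i q. q i) UNIV"
    proof (subst Q.indep_vars_iff_distr_eq_PiM)
      show "distr Q (\<Pi>\<^sub>M i\<in>UNIV. \<mu>) (\<lambda>x. \<lambda>i\<in>UNIV. x i) = (\<Pi>\<^sub>M i\<in>UNIV. distr Q \<mu> (\<lambda>q. q i))"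
        by (simp add: restrict_UNIV distr0 assms(4)[symmetric])
    qed (auto intro: rv)
    then show ?thesis unfolding Q.indep_vars_def2 E_def by simp
  qed
  define A where "A n = sigma_sets (space Q) (\<Union>i\<in>{n} \<times> UNIV. E i)" for n :: nat
  have indepA: "Q.indep_sets A UNIV"
    unfolding A_def
  proof (rule Q.indep_sets_collect_sigma)
    have u: "(\<Union>j\<in>UNIV. {j} \<times> (UNIV :: (int ^ 'd) set)) = UNIV" by auto
    show "Q.indep_sets E (\<Union>j\<in>UNIV. {j} \<times> UNIV)" unfolding u by (rule indepE)
    fix i j
    show "Int_stable (E i)"
    proof (rule Int_stableI)
      fix a b assume "a \<in> E i" "b \<in> E i"
      then obtain B1 B2 where "B1 \<in> sets \<mu>" "B2 \<in> sets \<mu>"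
        "a = (\<lambda>q. q i) -` B1 \<inter> space Q" "b = (\<lambda>q. q i) -` B2 \<inter> space Q"
        unfolding E_def by auto
      then show "a \<inter> b \<in> E i" unfolding E_def
        by (intro CollectI exI[of _ "B1 \<inter> B2"]) auto
    qed
  next
    show "disjoint_family_on (\<lambda>n. {n} \<times> (UNIV :: (int ^ 'd) set)) UNIV"
      by (auto simp: disjoint_family_on_def)
  qed
  have Esub: "E i \<subseteq> Pow (space Q)" for i unfolding E_def by auto
  have sa: "sigma_algebra (space Q) (A n)" for n
    unfolding A_def by (rule sigma_algebra_sigma_sets) (use Esub in auto)
  define X where "X = {q \<in> space Q. \<forall>N. \<exists>T\<ge>N. \<exists>y\<in>RR T. Pos q T y}"
  have Xtail: "X \<in> Q.tail_events A"
    unfolding Q.tail_events_def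
  proof (rule InterI, clarify)
    fix n :: nat
    have sub: "\<Union>(A ` {n..}) \<subseteq> Pow (space Q)"
    proof -
      have "A m \<subseteq> Pow (space Q)" for m
      proof
        fix x assume "x \<in> A m"
        then have "x \<subseteq> space Q"
          unfolding A_def by (rule sigma_sets_into_sp[rotated]) (use Esub in auto)
        then show "x \<in> Pow (space Q)" by simp
      qed
      then show ?thesis by auto
    qed
    define Mn where "Mn = sigma (space Q) (\<Union>(A ` {n..}))"
    have sets_Mn: "sets Mn = sigma_sets (space Q) (\<Union>(A ` {n..}))"
      unfolding Mn_def by (rule sets_measure_of[OF sub])
    have space_Mn: "space Mn = space Q"
      unfolding Mn_def by (rule space_measure_of_conv)
    have coord: "(\<lambda>q. q (t,x)) \<in> measurable Mn \<mu>" if "n \<le> t" for t x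
    proof (rule measurableI)
      fix q assume "q \<in> space Mn"
      then show "q (t,x) \<in> space \<mu>"
        by (auto simp: space_Mn assms(4) space_PiM PiE_iff)
    next
      fix B assume "B \<in> sets \<mu>"
      then have "(\<lambda>q. q (t,x)) -` B \<inter> space Q \<in> E (t,x)" by (auto simp: E_def)
      then have "(\<lambda>q. q (t,x)) -` B \<inter> space Q \<in> A t"
        unfolding A_def by (intro sigma_sets.Basic) auto
      then have "(\<lambda>q. q (t,x)) -` B \<inter> space Q \<in> \<Union>(A ` {n..})" using that by auto
      then show "(\<lambda>q. q (t,x)) -` B \<inter> space Mn \<in> sets Mn"
        unfolding sets_Mn space_Mn by (rule sigma_sets.Basic)
    qed
    have ck: "(\<lambda>q. q (t,x) k) \<in> borel_measurable Mn" if "n \<le> t" for t x k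
      using measurable_compose[OF coord[OF that] mu] by simp
    have EEm: "(\<lambda>q. EE q s z t) \<in> borel_measurable Mn" if "n \<le> s" for s z t
      using that
    proof (induction t arbitrary: s z)
      case 0
      then show ?case by simp
    next
      case (Suc t)
      have IH[measurable]: "(\<lambda>q. EE q (Suc s) y t) \<in> borel_measurable Mn" for y
        using Suc by auto
      have ck'[measurable]: "(\<lambda>q. q (s,z) k) \<in> borel_measurable Mn" for k
        using ck Suc.prems by auto
      show ?case unfolding EE.simps by measurable
    qed
    have eem[measurable]: "(\<lambda>q. ee q s z t) \<in> borel_measurable Mn" if "n \<le> s" for s z t
      unfolding ee_def using EEm[OF that] by measurable
    have Posm: "{q \<in> space Mn. Pos q s z} \<in> sets Mn" if "n \<le> s" for s z
    proof -
      note eem[OF that, measurable]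
      have "Measurable.pred Mn (\<lambda>q. Pos q s z)" unfolding Pos_def by measurable
      then show ?thesis by simp
    qed
    have Sm: "{q \<in> space Q. \<exists>y\<in>RR T. Pos q T y} \<in> sets Mn" if "n \<le> T" for T
    proof -
      have "{q \<in> space Q. \<exists>y\<in>RR T. Pos q T y} = (\<Union>y\<in>RR T. {q \<in> space Mn. Pos q T y})"
        by (auto simp: space_Mn)
      also have "\<dots> \<in> sets Mn"
        using Posm[OF that] finite_RR by (intro sets.finite_UN) auto
      finally show ?thesis .
    qed
    have Xeq: "X = (\<Inter>N\<in>{n..}. \<Union>T\<in>{N..}. {q \<in> space Q. \<exists>y\<in>RR T. Pos q T y})"
    proof (intro equalityI subsetI)
      fix q assume "q \<in> X"
      then have sp: "q \<in> space Q" and H: "\<forall>N. \<exists>T\<ge>N. \<exists>y\<in>RR T. Pos q T y"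
        unfolding X_def by auto
      show "q \<in> (\<Inter>N\<in>{n..}. \<Union>T\<in>{N..}. {q \<in> space Q. \<exists>y\<in>RR T. Pos q T y})"
      proof (rule INT_I)
        fix N assume "N \<in> {n..}"
        from spec[OF H, of N] obtain T where "T \<ge> N" "\<exists>y\<in>RR T. Pos q T y" by blast
        then show "q \<in> (\<Union>T\<in>{N..}. {q \<in> space Q. \<exists>y\<in>RR T. Pos q T y})"
          using sp by auto
      qed
    next
      fix q assume q: "q \<in> (\<Inter>N\<in>{n..}. \<Union>T\<in>{N..}. {q \<in> space Q. \<exists>y\<in>RR T. Pos q T y})"
      then have sp: "q \<in> space Q" by auto
      have "\<exists>T\<ge>N. \<exists>y\<in>RR T. Pos q T y" for N
      proof -
        from q have "q \<in> (\<Union>T\<in>{max N n..}. {q \<in> space Q. \<exists>y\<in>RR T. Pos q T y})" by auto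
        then show ?thesis by auto
      qed
      then show "q \<in> X" unfolding X_def using sp by auto
    qed
    have U: "(\<Union>T\<in>{N..}. {q \<in> space Q. \<exists>y\<in>RR T. Pos q T y}) \<in> sets Mn" if "n \<le> N" for N
    proof (rule sets.countable_UN')
      show "(\<lambda>T. {q \<in> space Q. \<exists>y\<in>RR T. Pos q T y}) ` {N..} \<subseteq> sets Mn"
        using Sm that by auto
    qed simp
    have "X \<in> sets Mn"
      unfolding Xeq
    proof (rule sets.countable_INT')
      show "(\<lambda>N. \<Union>T\<in>{N..}. {q \<in> space Q. \<exists>y\<in>RR T. Pos q T y}) ` {n..} \<subseteq> sets Mn"
        using U by auto
    qed auto
    then show "X \<in> sigma_sets (space Q) (\<Union>(A ` {n..}))" using sets_Mn by simp
  qed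
  have Xev: "X \<in> Q.events"
    using Q.tail_events_sets[of A] indepA Xtail by (auto simp: Q.indep_sets_def)
  have XPos: "q \<in> X \<longleftrightarrow> Pos q 0 0" if "good q" "q \<in> space Q" for q
    unfolding X_def using that by (auto simp: Pos_RR[OF \<open>good q\<close>, symmetric])
  have "Q.prob X = 0 \<or> Q.prob X = 1"
    by (rule Q.kolmogorov_0_1_law[OF sa indepA Xtail])
  then show ?thesis
  proof
    assume "Q.prob X = 1"
    then have "AE q in Q. q \<in> X" by (rule Q.AE_prob_1)
    with AEgood have "AE q in Q. 0 < surv_prob q"
    proof eventually_elim
      case (elim q)
      then have "q \<in> space Q" unfolding X_def by auto
      then show ?case using elim XPos surv_pos_iff good_def by blast
    qed
    then show ?thesis ..
  next
    assume "Q.prob X = 0"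
    then have "AE q in Q. q \<notin> X" using Q.prob_eq_0[OF Xev] by simp
    with AEgood AE_space have "AE q in Q. surv_prob q = 0"
    proof eventually_elim
      case (elim q)
      then show ?case using XPos surv_zero good_def by blast
    qed
    then show ?thesis ..
  qed
qed

end
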